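(* Let $E=\bigcup_{i\in I}\gamma_i+B_i^\oplus$ be a semi-simple expression over $\mathbb{N}^k$ and let $n=|I|\cdot\|E\|$. For each $j\in\{1,\dots,k\}$ define $p_j=\operatorname{lcm}(m_1,\dots,m_{|I|})$, where (indexing $I=\{1,\dots,|I|\}$) $m_i=m$ if $m\mathbf{e}_j\in B_i$ and $m_i=1$ otherwise. Then $p_j=O\big(e^{\sqrt{n\log n}}\big)$.
   Context: $\mathbb{N}$ includes $0$; $\mathbf{e}_j$ is the $j$-th unit vector. For finite $B\subseteq\mathbb{N}^k$, $B^\oplus$ is the set of $\mathbb{N}$-linear combinations of elements of $B$ and $\gamma+B^\oplus=\{\gamma+\sigma:\sigma\in B^\oplus\}$. $B$ is free if every element of $B^\oplus$ has a unique representation as such a combination. A semi-simple expression is a finite union of expressions $\gamma_i+B_i^\oplus$ with $B_i$ free and denoted sets pairwise disjoint. For $\sigma=(b_1,\dots,b_k)$, $\|\sigma\|=\max_j b_j$; for $B\subseteq\mathbb{N}^k$, $\|B\|=\max_{\sigma\in B}\|\sigma\|$; and $\|E\|=\max(\max_{i\in I}\|\gamma_i\|,\max_{i\in I}\|B_i\|,2)$. (Each free basis $B_i$ contains at most one element of the form $m\mathbf{e}_j$ for fixed $j$.) *)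

theory Defs
  imports Complex_Main
begin

text \<open>Vectors of \<nat>^k are represented as functions nat \<Rightarrow> nat vanishing at
  coordinates \<ge> k (coordinates are 0-indexed: 0..k-1).\<close>

type_synonym vec = "nat \<Rightarrow> nat"

definition in_Nk :: "nat \<Rightarrow> vec \<Rightarrow> bool" where
  "in_Nk k v \<longleftrightarrow> (\<forall>i\<ge>k. v i = 0)"

definition unit_vec :: "nat \<Rightarrow> vec" where
  "unit_vec j = (\<lambda>i. if i = j then 1 else 0)"

definition lincomb :: "(vec \<Rightarrow> nat) \<Rightarrow> vec set \<Rightarrow> vec" where
  "lincomb c B = (\<lambda>i. \<Sum>b\<in>B. c b * b i)"

definition span_N :: "vec set \<Rightarrow> vec set" where
  "span_N B = {lincomb c B | c. True}"

definition linset :: "vec \<Rightarrow> vec set \<Rightarrow> vec set" where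
  "linset \<gamma> B = {(\<lambda>i. \<gamma> i + s i) | s. s \<in> span_N B}"

definition free_basis :: "vec set \<Rightarrow> bool" where
  "free_basis B \<longleftrightarrow> (\<forall>c c'. lincomb c B = lincomb c' B \<longrightarrow> (\<forall>b\<in>B. c b = c' b))"

text \<open>A semi-simple expression over \<nat>^k with index set I = {0..<t}:
  bases B i finite and free, all vectors in \<nat>^k, denoted sets pairwise disjoint.\<close>
definition semi_simple :: "nat \<Rightarrow> nat \<Rightarrow> (nat \<Rightarrow> vec) \<Rightarrow> (nat \<Rightarrow> vec set) \<Rightarrow> bool" where
  "semi_simple k t \<gamma> B \<longleftrightarrow>
     (\<forall>i<t. in_Nk k (\<gamma> i) \<and> finite (B i) \<and> (\<forall>b\<in>B i. in_Nk k b) \<and> free_basis (B i)) \<and>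
     (\<forall>i<t. \<forall>i'<t. i \<noteq> i' \<longrightarrow> linset (\<gamma> i) (B i) \<inter> linset (\<gamma> i') (B i') = {})"

definition vnorm :: "nat \<Rightarrow> vec \<Rightarrow> nat" where
  "vnorm k v = Max (insert 0 (v ` {..<k}))"

definition bnorm :: "nat \<Rightarrow> vec set \<Rightarrow> nat" where
  "bnorm k B = Max (insert 0 (vnorm k ` B))"

definition enorm :: "nat \<Rightarrow> nat \<Rightarrow> (nat \<Rightarrow> vec) \<Rightarrow> (nat \<Rightarrow> vec set) \<Rightarrow> nat" where
  "enorm k t \<gamma> B = Max ({2} \<union> (\<lambda>i. vnorm k (\<gamma> i)) ` {..<t} \<union> (\<lambda>i. bnorm k (B i)) ` {..<t})"

definition mult_j :: "vec set \<Rightarrow> nat \<Rightarrow> nat" where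
  "mult_j Bi j = (if \<exists>m. (\<lambda>x. m * unit_vec j x) \<in> Bi
                  then (THE m. (\<lambda>x. m * unit_vec j x) \<in> Bi) else 1)"

definition p_j :: "nat \<Rightarrow> (nat \<Rightarrow> vec set) \<Rightarrow> nat \<Rightarrow> nat" where
  "p_j t B j = Lcm ((\<lambda>i. mult_j (B i) j) ` {..<t})"

end

theory Submission
  imports Defs "HOL-Computational_Algebra.Primes"
begin


lemma prod_primes_dvd:
  fixes x :: nat
  assumes "finite S" "\<And>p. p \<in> S \<Longrightarrow> prime p" "\<And>p. p \<in> S \<Longrightarrow> p dvd x" "x \<noteq> 0"
  shows "(\<Prod>S) dvd x"
proof -
  have "(\<Prod>S) = (\<Prod>p\<in>S. p ^ (1::nat))" by simp
  also have "\<dots> dvd x"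
  proof (rule multiplicity_le_imp_dvd)
    show "(\<Prod>p\<in>S. p ^ (1::nat)) \<noteq> 0" using assms(1,2) by (metis not_prime_0 power_one_right prod_zero_iff)
    fix q :: nat assume q: "prime q"
    show "multiplicity q (\<Prod>p\<in>S. p ^ (1::nat)) \<le> multiplicity q x"
      using assms q by (subst multiplicity_prod_prime_powers) (auto intro!: multiplicity_geI[where n=1, simplified])
  qed
  finally show ?thesis .
qed

lemma prod_sub2: "S \<subseteq> {2::nat} \<Longrightarrow> \<Prod>S \<le> 2"
  by (drule subset_singletonD) auto

lemma binom_le: "((2*m+1) choose m) \<le> (4::nat)^m"
proof -
  have "2 * ((2*m+1) choose m) = ((2*m+1) choose m) + ((2*m+1) choose (m+1))"
    using binomial_symmetric[of m "2*m+1"] by simp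
  also have "\<dots> = (\<Sum>k\<in>{m, m+1}. (2*m+1) choose k)" by simp
  also have "\<dots> \<le> (\<Sum>k\<le>2*m+1. (2*m+1) choose k)" by (intro sum_mono2) auto
  also have "\<dots> = 2^(2*m+1)" by (rule choose_row_sum)
  also have "\<dots> = 2 * 4^m" by (simp add: power_mult)
  finally show ?thesis by simp
qed

lemma primorial_le: "(\<Prod>{p::nat. prime p \<and> p \<le> n}) \<le> 4^n"
proof (induction n rule: less_induct)
  case (less n)
  show ?case
  proof (cases "n \<le> 2")
    case True
    show ?thesis
    proof (cases "n = 0")
      case True
      have "{p::nat. prime p \<and> p \<le> n} = {}" using True by (auto dest: prime_ge_2_nat)
      then show ?thesis unfolding \<open>{p::nat. prime p \<and> p \<le> n} = {}\<close> by simp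
    next
      case n0: False
      have "{p::nat. prime p \<and> p \<le> n} \<subseteq> {2}" using True by (auto dest: prime_ge_2_nat)
      then have "\<Prod>{p::nat. prime p \<and> p \<le> n} \<le> 2"
        by (rule prod_sub2)
      also have "\<dots> \<le> 4^1" by simp
      also have "(4::nat)^1 \<le> 4^n" using n0 by (intro power_increasing) auto
      finally show ?thesis .
    qed
  next
    case False
    show ?thesis
    proof (cases "even n")
      case True
      have "{p::nat. prime p \<and> p \<le> n} = {p. prime p \<and> p \<le> n - 1}"
      proof (intro Collect_cong)
        fix p
        have "\<not> prime n" using True False prime_odd_nat[of n] by auto
        then show "(prime p \<and> p \<le> n) = (prime p \<and> p \<le> n - 1)" by (cases "p = n") auto
      qed
      then have "\<Prod>{p::nat. prime p \<and> p \<le> n} \<le> 4^(n-1)" using less[of "n-1"] False by simp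
      also have "\<dots> \<le> 4^n" by (intro power_increasing) auto
      finally show ?thesis .
    next
      case odd: False
      then obtain m where n: "n = 2*m+1" by (rule oddE)
      with False have m: "m \<ge> 1" by simp
      let ?A = "{p::nat. prime p \<and> p \<le> m+1}"
      let ?B = "{p::nat. prime p \<and> m+1 < p \<and> p \<le> 2*m+1}"
      have fA: "finite ?A" by simp
      have fB: "finite ?B" by (rule finite_subset[of _ "{..2*m+1}"]) auto
      have eq: "{p::nat. prime p \<and> p \<le> n} = ?A \<union> ?B" using n by auto
      have split: "\<Prod>{p::nat. prime p \<and> p \<le> n} = \<Prod>?A * \<Prod>?B"
        unfolding eq by (rule prod.union_disjoint[OF fA fB]) auto
      have Bdvd: "\<Prod>?B dvd (2*m+1) choose m"
      proof (rule prod_primes_dvd[OF fB])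
        fix p assume p: "p \<in> ?B"
        then have pr: "prime p" by simp
        have "p dvd fact (2*m+1)" using p prime_dvd_fact_iff[of p "2*m+1"] by blast
        also have "fact (2*m+1) = fact m * fact (m+1) * ((2*m+1) choose m)"
          using binomial_fact_lemma[of m "2*m+1"] by (simp add: mult_2)
        finally have "p dvd fact m * fact (m+1) * ((2*m+1) choose m)" .
        moreover have "\<not> p dvd fact m" "\<not> p dvd fact (m+1)" using p prime_dvd_fact_iff[of p m] prime_dvd_fact_iff[of p "m+1"] by auto
        ultimately show "p dvd (2*m+1) choose m" using pr by (auto simp: prime_dvd_mult_iff)
      qed auto
      have B: "\<Prod>?B \<le> 4^m"
        using dvd_imp_le[OF Bdvd] binom_le[of m] by simp
      have A: "\<Prod>?A \<le> 4^(m+1)" using less[of "m+1"] n m by simp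
      have "\<Prod>?A * \<Prod>?B \<le> 4^(m+1) * 4^m" using A B by (rule mult_le_mono)
      also have "(4::nat)^(m+1) * 4^m = 4^n" using n by (simp add: power_add[symmetric])
      finally show ?thesis using split by simp
    qed
  qed
qed



lemma lcm_bound_pow:
  fixes M :: "nat set"
  assumes "finite M" "\<forall>m\<in>M. 1 \<le> m \<and> m \<le> N"
  shows "Lcm M \<le> N ^ card M"
proof -
  have pos: "\<Prod>M > 0" using assms by (auto simp: prod_pos)
  have "Lcm M dvd \<Prod>M" by (rule Lcm_least) (use assms(1) in \<open>auto intro: dvd_prodI\<close>)
  then have "Lcm M \<le> \<Prod>M" using pos by (rule dvd_imp_le)
  also have "\<dots> \<le> (\<Prod>m\<in>M. N)" using assms by (intro prod_mono) auto
  also have "\<dots> = N ^ card M" by simp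
  finally show ?thesis .
qed

lemma lcm_bound_cheb:
  fixes M :: "nat set"
  assumes "finite M" "\<forall>m\<in>M. 1 \<le> m \<and> m \<le> N" "N \<ge> 1"
  shows "Lcm M \<le> 4^N * N ^ card {p. prime p \<and> p * p \<le> N}"
proof -
  define P where "P = {p::nat. prime p \<and> p \<le> N}"
  define g where "g p = Max {e. e \<le> N \<and> p^e \<le> N}" for p :: nat
  define D where "D = (\<Prod>p\<in>P. p ^ g p)"
  have fP: "finite P" unfolding P_def by simp
  have primeP: "\<And>p. p \<in> P \<Longrightarrow> prime p" unfolding P_def by simp
  have fS: "finite {e. e \<le> N \<and> p^e \<le> N}" for p :: nat by (rule finite_subset[of _ "{..N}"]) auto
  have gin: "g p \<le> N \<and> p ^ g p \<le> N" for p
  proof -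
    have "0 \<in> {e. e \<le> N \<and> p^e \<le> N}" using assms(3) by simp
    then have "g p \<in> {e. e \<le> N \<and> p^e \<le> N}" unfolding g_def using fS[of p] by (intro Max_in) auto
    then show ?thesis by simp
  qed
  have gge: "e \<le> g p" if "e \<le> N" "p^e \<le> N" for e p
    unfolding g_def using fS[of p] that by (intro Max_ge) auto
  have Dpos: "D > 0" unfolding D_def using fP primeP by (auto intro!: prod_pos simp: prime_gt_0_nat)
  have mD: "m dvd D" if m: "m \<in> M" for m
  proof (rule multiplicity_le_imp_dvd)
    show "m \<noteq> 0" using assms(2) m by auto
    fix q :: nat assume q: "prime q"
    have mq: "multiplicity q D = (if q \<in> P then g q else 0)"
      unfolding D_def by (rule multiplicity_prod_prime_powers[OF fP primeP q])
    show "multiplicity q m \<le> multiplicity q D"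
    proof (cases "multiplicity q m = 0")
      case False
      define e where "e = multiplicity q m"
      have dv: "q ^ e dvd m" unfolding e_def by (rule multiplicity_dvd)
      have m1: "1 \<le> m" "m \<le> N" using assms(2) m by auto
      have qe: "q ^ e \<le> N" using dvd_imp_le[OF dv] m1 by simp
      have "e > 0" using False unfolding e_def by simp
      then have "q dvd q ^ e" by (simp add: dvd_power)
      then have "q dvd m" using dv by (rule dvd_trans)
      then have "q \<le> m" using m1 by (intro dvd_imp_le) auto
      then have "q \<le> N" using m1 by linarith
      then have qP: "q \<in> P" unfolding P_def using q by simp
      have "e < 2 ^ e" by (rule less_exp)
      also have "\<dots> \<le> q ^ e" using prime_ge_2_nat[OF q] by (intro power_mono) auto
      finally have "e \<le> N" using qe by simp
      then have "e \<le> g q" using gge qe by simp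
      then show ?thesis using mq qP unfolding e_def by simp
    qed simp
  qed
  have "Lcm M dvd D" by (rule Lcm_least) (use mD in auto)
  then have "Lcm M \<le> D" using Dpos by (rule dvd_imp_le)
  also have "D \<le> (\<Prod>p\<in>P. p * (if p * p \<le> N then N else 1))"
    unfolding D_def
  proof (intro prod_mono conjI)
    fix p assume p: "p \<in> P"
    have p2: "p \<ge> 2" using primeP[OF p] prime_ge_2_nat by blast
    show "p ^ g p \<le> p * (if p * p \<le> N then N else 1)"
    proof (cases "p * p \<le> N")
      case True
      have "N \<le> p * N" using p2 by simp
      then have "p ^ g p \<le> p * N" using gin[of p] by linarith
      then show ?thesis using True by simp
    next
      case False
      have "g p \<le> 1"
      proof (rule ccontr)
        assume "\<not> g p \<le> 1"
        then have "p ^ 2 \<le> p ^ g p" using p2 by (intro power_increasing) auto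
        then show False using gin[of p] False by (simp add: power2_eq_square)
      qed
      then have "p ^ g p \<le> p ^ 1" using p2 by (intro power_increasing) auto
      then show ?thesis using False by simp
    qed
  qed simp
  also have "\<dots> = (\<Prod>P) * (\<Prod>p\<in>P. (if p * p \<le> N then N else 1))"
    by (simp add: prod.distrib)
  also have "(\<Prod>p\<in>P. (if p * p \<le> N then N else 1)) = (\<Prod>p\<in>{p\<in>P. p * p \<le> N}. N)"
    using prod.inter_filter[OF fP, of "\<lambda>_. N" "\<lambda>p. p * p \<le> N"] by simp
  also have "{p\<in>P. p * p \<le> N} = {p. prime p \<and> p * p \<le> N}"
  proof (intro Collect_cong iffI)
    fix p :: nat
    assume h: "prime p \<and> p * p \<le> N"
    have "p \<le> p * p" by (rule le_square)
    then have "p \<le> N" using h by linarith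
    then show "p \<in> P \<and> p * p \<le> N" using h unfolding P_def by simp
  qed (simp add: P_def)
  also have "(\<Prod>p\<in>{p. prime p \<and> p * p \<le> N}. N) = N ^ card {p. prime p \<and> p * p \<le> N}" by simp
  finally have *: "Lcm M \<le> (\<Prod>P) * N ^ card {p. prime p \<and> p * p \<le> N}" .
  have "(\<Prod>P) \<le> 4^N" unfolding P_def by (rule primorial_le)
  then have "(\<Prod>P) * N ^ card {p. prime p \<and> p * p \<le> N} \<le> 4^N * N ^ card {p. prime p \<and> p * p \<le> N}"
    by (rule mult_right_mono) simp
  with * show ?thesis by linarith
qed



lemma ln2_le: "ln (2::real) \<le> 0.72"
proof -
  have "1 + 0.36 + (0.36::real)^2/2 \<le> exp 0.36" by (rule exp_lower_Taylor_quadratic) simp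
  then have h: "1.42 \<le> exp (0.36::real)" by (simp add: power2_eq_square)
  have "exp (0.72::real) = exp 0.36 * exp 0.36" by (simp flip: exp_add)
  also have "\<dots> \<ge> 1.42 * 1.42" using h by (intro mult_mono) auto
  finally have "2 \<le> exp (0.72::real)" by simp
  then have "ln 2 \<le> ln (exp (0.72::real))" by (subst ln_le_cancel_iff) auto
  then show ?thesis by simp
qed

lemma ln_le_045: assumes "(a::real) > 0" shows "ln a \<le> 0.45 * a"
proof -
  have "1 + 0.45*a + (0.45*a)^2/2 \<le> exp (0.45*a)" by (rule exp_lower_Taylor_quadratic) (use assms in simp)
  moreover have "a \<le> 1 + 0.45*a + (0.45*a)^2/2"
  proof -
    have "0 \<le> 0.10125 * (a - 220/81)^2" by simp
    then show ?thesis by (simp add: power2_eq_square field_simps)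
  qed
  ultimately have "a \<le> exp (0.45*a)" by linarith
  then have "ln a \<le> ln (exp (0.45*a))" using assms by (subst ln_le_cancel_iff) auto
  then show ?thesis by simp
qed

lemma sqrt_ln_bound: assumes "(x::real) \<ge> 1" shows "sqrt x * ln x \<le> 0.075 * x + 60000"
proof -
  define u where "u = sqrt x"
  have u0: "u > 0" "u \<ge> 1" using assms unfolding u_def by auto
  have x: "x = u^2" using assms unfolding u_def by simp
  have lnx: "ln x = 2 * ln u" using x u0 by (simp add: ln_realpow)
  have "ln (u/40) \<le> u/40 - 1" using u0 by (intro ln_le_minus_one) simp
  moreover have "ln (u/40) = ln u - ln 40" using u0 by (simp add: ln_div)
  moreover have "ln (40::real) \<le> 40 - 1" by (intro ln_le_minus_one) simp
  ultimately have lu: "ln u \<le> u/40 + 38" by linarith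
  have "sqrt x * ln x = 2 * u * ln u" using lnx u_def by simp
  also have "\<dots> \<le> 2 * u * (u/40 + 38)" using lu u0 by (intro mult_left_mono) auto
  also have "\<dots> \<le> 0.075 * u^2 + 60000"
  proof -
    have "0 \<le> (u - 1520)^2 / 40" by simp
    then show ?thesis by (simp add: power2_eq_square algebra_simps)
  qed
  finally show ?thesis using x by simp
qed

lemma key_real:
  fixes x T :: real
  assumes x: "x \<ge> 2" and T: "T \<ge> 1" and gt: "T * ln x > sqrt (T * x * ln (T * x))"
  shows "sqrt (T * x * ln (T * x)) \<ge> 1.55 * x"
proof -
  define a where "a = ln x"
  define L where "L = ln (T * x)"
  define s where "s = sqrt (T * x * L)"
  have a0: "a > 0" using x unfolding a_def by simp
  have Tx: "T * x \<ge> 2" using x T by (metis mult_le_cancel_right1 order_trans mult.commute le_cases x mult_mono zero_le_one one_le_numeral linorder_not_le dual_order.trans) 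
  have La: "L \<ge> a" unfolding L_def a_def using x T by (simp add: ln_mult)
  have L0: "L > 0" using La a0 by simp
  have s0: "s \<ge> 0" unfolding s_def using L0 Tx by simp
  have s2: "s^2 = T * x * L" unfolding s_def using L0 Tx by simp
  have gt': "T * a > s" using gt unfolding s_def a_def L_def by simp
  have "(T * a)^2 > s^2" using gt' s0 by (intro power_strict_mono) auto
  then have "T * T * a * a > T * x * L" using s2 by (simp add: power2_eq_square algebra_simps)
  then have h1: "T * a * a > x * L" using T by (simp add: mult.assoc)
  then have "T * a * a > x * a" using La x by (smt (verit) mult_left_mono)
  then have "T * a > x" using a0 by simp
  then have Tgt: "T > x / a" using a0 by (simp add: field_simps)
  then have "(x / a) * x < T * x" using x by (intro mult_strict_right_mono) auto
  then have "T * x > x * x / a" by simp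
  moreover have "x * x / a > 0" using x a0 by simp
  ultimately have "L > ln (x * x / a)" unfolding L_def by (simp add: ln_less_cancel_iff)
  also have "ln (x * x / a) = 2 * a - ln a" using x a0 unfolding a_def by (simp add: ln_div ln_mult)
  finally have "L > 2 * a - ln a" .
  then have L155: "L \<ge> 1.55 * a" using ln_le_045[OF a0] by simp
  have "T * a * a > x * (1.55 * a)" using h1 L155 x by (smt (verit) mult_left_mono)
  then have Ta: "T * a > 1.55 * x" using a0 by (simp add: algebra_simps)
  have "s^2 = (T * a) * x * (L / a)" using s2 a0 by (simp add: field_simps)
  also have "\<dots> \<ge> (1.55 * x) * x * 1.55"
  proof -
    have h2: "L / a \<ge> 1.55" using L155 a0 by (simp add: field_simps)
    have h1: "(T * a) * x \<ge> (1.55 * x) * x" using Ta x by (intro mult_right_mono) auto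
    show ?thesis using x T a0 by (intro mult_mono[OF h1 h2]) auto
  qed
  finally have "s^2 \<ge> (1.55 * x)^2" by (simp add: power2_eq_square algebra_simps)
  then have "s \<ge> 1.55 * x" using s0 x by (meson abs_le_square_iff abs_of_nonneg order_trans power2_le_imp_le)
  then show ?thesis unfolding s_def L_def .
qed



lemma real_final:
  fixes x T l :: real
  assumes x: "x \<ge> 2" and T: "T \<ge> 1" and l1: "l \<le> T * ln x"
    and l2: "l \<le> x * ln 4 + sqrt x * ln x"
  shows "l \<le> sqrt (T * x * ln (T * x)) + 60000"
proof (cases "T * ln x \<le> sqrt (T * x * ln (T * x))")
  case True
  then show ?thesis using l1 by linarith
next
  case False
  then have s: "sqrt (T * x * ln (T * x)) \<ge> 1.55 * x" using key_real[OF x T] by simp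
  have "ln (4::real) = 2 * ln 2" using ln_realpow[of 2 2] by simp
  then have "ln (4::real) \<le> 1.44" using ln2_le by simp
  then have "x * ln 4 \<le> x * 1.44" using x by (intro mult_left_mono) auto
  then have a: "x * ln 4 \<le> 36/25 * x" by simp
  have "sqrt x * ln x \<le> 0.075 * x + 60000" using x by (intro sqrt_ln_bound) simp
  then have b: "sqrt x * ln x \<le> 3/40 * x + 60000" by simp
  have c: "sqrt (T * x * ln (T * x)) \<ge> 31/20 * x" using s by simp
  show ?thesis using a b c l2 x by linarith
qed

lemma card_sq_primes: "real (card {p::nat. prime p \<and> p * p \<le> N}) \<le> sqrt (real N)"
proof -
  define r where "r = nat \<lfloor>sqrt (real N)\<rfloor>"
  have sub: "{p::nat. prime p \<and> p * p \<le> N} \<subseteq> {1..r}"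
  proof
    fix p assume p: "p \<in> {p::nat. prime p \<and> p * p \<le> N}"
    then have p1: "p \<ge> 1" using prime_ge_1_nat by auto
    have "real p * real p \<le> real N" using p by (metis (mono_tags, lifting) mem_Collect_eq of_nat_le_iff of_nat_mult)
    then have "real p \<le> sqrt (real N)" by (simp add: real_le_rsqrt power2_eq_square)
    then have "p \<le> r" unfolding r_def by (simp add: le_nat_floor)
    then show "p \<in> {1..r}" using p1 by simp
  qed
  have "card {p::nat. prime p \<and> p * p \<le> N} \<le> card {1..r}" by (rule card_mono[OF _ sub]) simp
  then have "real (card {p::nat. prime p \<and> p * p \<le> N}) \<le> real r" by simp
  also have "real r \<le> sqrt (real N)" unfolding r_def by simp
  finally show ?thesis .
qed

lemma enorm_ge2: "enorm k t \<gamma> B \<ge> 2"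
  unfolding enorm_def by (intro Max_ge) auto

lemma lincomb_single:
  assumes "finite B" "u \<in> B"
  shows "lincomb (\<lambda>b. if b = u then a else 0) B = (\<lambda>i. a * u i)"
proof
  fix i
  have "(\<Sum>b\<in>B. (if b = u then a else 0) * b i) = (\<Sum>b\<in>B. if b = u then a * u i else 0)"
    by (intro sum.cong) auto
  also have "\<dots> = a * u i" using assms by (simp add: sum.delta')
  finally show "lincomb (\<lambda>b. if b = u then a else 0) B i = a * u i" unfolding lincomb_def .
qed

lemma free_no_zero:
  assumes "finite B" "free_basis B" "u \<in> B"
  shows "u \<noteq> (\<lambda>_. 0)"
proof
  assume u0: "u = (\<lambda>_. 0)"
  have "lincomb (\<lambda>b. if b = u then 1 else 0) B = lincomb (\<lambda>b. if b = u then 0 else 0) B"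
    using lincomb_single[OF assms(1,3), of 1] lincomb_single[OF assms(1,3), of 0] u0 by simp
  then show False using assms(2,3) unfolding free_basis_def by fastforce
qed

lemma free_unique:
  assumes fin: "finite B" and fr: "free_basis B"
    and mu: "(\<lambda>x. m * unit_vec j x) \<in> B" and mv: "(\<lambda>x. m' * unit_vec j x) \<in> B"
  shows "m = m'"
proof (rule ccontr)
  assume ne: "m \<noteq> m'"
  define u where "u = (\<lambda>x. m * unit_vec j x)"
  define v where "v = (\<lambda>x. m' * unit_vec j x)"
  have uj: "unit_vec j j = 1" by (simp add: unit_vec_def)
  have uv: "u \<noteq> v" using ne uj unfolding u_def v_def by (metis mult.right_neutral)
  have m'0: "m' \<noteq> 0"
  proof
    assume "m' = 0"
    then have "v = (\<lambda>_. 0)" unfolding v_def by simp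
    then show False using free_no_zero[OF fin fr mv] unfolding v_def by simp
  qed
  have u: "u \<in> B" and v: "v \<in> B" using mu mv unfolding u_def v_def by auto
  have "lincomb (\<lambda>b. if b = u then m' else 0) B = (\<lambda>i. m' * u i)" by (rule lincomb_single[OF fin u])
  also have "\<dots> = (\<lambda>i. m * v i)" unfolding u_def v_def by (simp add: mult.left_commute)
  also have "\<dots> = lincomb (\<lambda>b. if b = v then m else 0) B" by (rule lincomb_single[OF fin v, symmetric])
  finally have "(\<lambda>b. if b = u then m' else 0) u = (\<lambda>b. if b = v then m else 0) u"
    using fr u unfolding free_basis_def by blast
  then show False using uv m'0 by simp
qed

lemma mult_j_le:
  assumes ss: "semi_simple k t \<gamma> B" and i: "i < t" and j: "j < k"
  shows "mult_j (B i) j \<le> enorm k t \<gamma> B"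
proof (cases "\<exists>m. (\<lambda>x. m * unit_vec j x) \<in> B i")
  case False
  then show ?thesis using enorm_ge2[of k t \<gamma> B] unfolding mult_j_def by simp
next
  case True
  then obtain m where m: "(\<lambda>x. m * unit_vec j x) \<in> B i" by blast
  have uj: "unit_vec j j = 1" by (simp add: unit_vec_def)
  have "(THE m. (\<lambda>x. m * unit_vec j x) \<in> B i) = m"
  proof (rule the_equality)
    fix m' assume "(\<lambda>x. m' * unit_vec j x) \<in> B i"
    show "m' = m" using free_unique[of "B i" m' j m] ss i m \<open>(\<lambda>x. m' * unit_vec j x) \<in> B i\<close>
      unfolding semi_simple_def by blast
  qed (rule m)
  then have eq: "mult_j (B i) j = m" unfolding mult_j_def using True by simp
  have fin: "finite (B i)" using ss i unfolding semi_simple_def by blast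
  have "m \<le> vnorm k (\<lambda>x. m * unit_vec j x)"
    unfolding vnorm_def using j uj by (intro Max_ge) (auto intro!: image_eqI[where x=j])
  also have "\<dots> \<le> bnorm k (B i)"
    unfolding bnorm_def using fin m by (intro Max_ge) auto
  also have "\<dots> \<le> enorm k t \<gamma> B"
    unfolding enorm_def using i by (intro Max_ge) auto
  finally show ?thesis using eq by simp
qed



theorem mainTheorem9:
  shows "\<exists>C>0. \<forall>k t \<gamma> B j. semi_simple k t \<gamma> B \<longrightarrow> j < k \<longrightarrow>
           real (p_j t B j) \<le>
             C * exp (sqrt (real (t * enorm k t \<gamma> B) * ln (real (t * enorm k t \<gamma> B))))"
proof (intro exI[of _ "exp 60000"] conjI allI impI)
  show "(0::real) < exp 60000" by simp
  fix k t \<gamma> B j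
  assume ss: "semi_simple k t \<gamma> B" and j: "j < k"
  define N where "N = enorm k t \<gamma> B"
  define M where "M = (\<lambda>i. mult_j (B i) j) ` {..<t}"
  define s where "s = sqrt (real (t * N) * ln (real (t * N)))"
  have N2: "N \<ge> 2" unfolding N_def by (rule enorm_ge2)
  have pj: "p_j t B j = Lcm M" unfolding p_j_def M_def by simp
  have fM: "finite M" unfolding M_def by simp
  have Mle: "\<forall>m\<in>M. m \<le> N" unfolding M_def N_def using mult_j_le[OF ss _ j] by auto
  have cM: "card M \<le> t" unfolding M_def using card_image_le[of "{..<t}"] by simp
  show "real (p_j t B j) \<le> exp 60000 * exp (sqrt (real (t * enorm k t \<gamma> B) * ln (real (t * enorm k t \<gamma> B))))"
  proof (cases "0 \<in> M")
    case True
    then have "Lcm M = 0" using fM by (simp add: Lcm_0_iff)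
    then show ?thesis using pj by simp
  next
    case False
    then have M1: "\<forall>m\<in>M. 1 \<le> m \<and> m \<le> N" using Mle by (metis less_one not_less)
    show ?thesis
    proof (cases "t = 0")
      case True
      then have "M = {}" unfolding M_def by simp
      then show ?thesis using pj True by simp
    next
      case t0: False
      have L1: "Lcm M \<ge> 1" using False fM by (metis Lcm_0_iff less_one not_less)
      have b1: "Lcm M \<le> N ^ t"
      proof -
        have "N ^ card M \<le> N ^ t" using cM N2 by (intro power_increasing) auto
        then show ?thesis using lcm_bound_pow[OF fM M1] by linarith
      qed
      have b2: "Lcm M \<le> 4^N * N ^ card {p. prime p \<and> p * p \<le> N}"
        using lcm_bound_cheb[OF fM M1] N2 by simp
      define l where "l = ln (real (Lcm M))"
      have lpos: "real (Lcm M) > 0" using L1 by simp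
      have "l \<le> ln (real (N ^ t))" unfolding l_def using b1 lpos N2 by (subst ln_le_cancel_iff) auto
      also have "\<dots> = real t * ln (real N)" by (simp add: ln_realpow)
      finally have l1: "l \<le> real t * ln (real N)" .
      have "l \<le> ln (real (4^N * N ^ card {p. prime p \<and> p * p \<le> N}))"
      proof -
        have "real (Lcm M) \<le> real (4^N * N ^ card {p. prime p \<and> p * p \<le> N})"
          using b2 by (simp only: of_nat_le_iff)
        then show ?thesis unfolding l_def using lpos by (rule ln_mono)
      qed
      also have "\<dots> = real N * ln 4 + real (card {p. prime p \<and> p * p \<le> N}) * ln (real N)"
        using N2 by (simp add: ln_mult ln_realpow)
      also have "\<dots> \<le> real N * ln 4 + sqrt (real N) * ln (real N)"
        using card_sq_primes[of N] N2 by (intro add_left_mono mult_right_mono) auto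
      finally have l2: "l \<le> real N * ln 4 + sqrt (real N) * ln (real N)" .
      have "l \<le> sqrt (real t * real N * ln (real t * real N)) + 60000"
        using real_final[of "real N" "real t" l] N2 t0 l1 l2 by simp
      then have "l \<le> 60000 + s" unfolding s_def by simp
      then have "exp l \<le> exp (60000 + s)" by simp
      then have "real (Lcm M) \<le> exp 60000 * exp s" using lpos unfolding l_def by (simp add: exp_add)
      then show ?thesis using pj unfolding s_def N_def by simp
    qed
  qed
qed


end
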